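(* Let $s\ge1$, $\varepsilon\ge0$, let $p,p'$ be Borel probability measures on $\mathbb R^n$ with finite $s$-th moments, let $Q$ be a finite partition of $\mathbb R^n$ into Borel sets, and define $\gamma,\gamma'\in\mathcal D(Q)$ by $\gamma(q):=p(q)$, $\gamma'(q):=p'(q)$. If $\mathcal W_s(p,p')\le\varepsilon$, then $\mathcal T_c(\gamma,\gamma')\le\varepsilon^s$.
   Context: $\mathcal W_s$ is the $s$-Wasserstein distance on $\mathbb R^n$ with respect to the Euclidean norm $\|\cdot\|$: $\mathcal W_s(p,p')^s=\inf_\pi\int\|x-y\|^s\,d\pi(x,y)$ over couplings $\pi$ of $p,p'$. For $q,q'\in Q$, $c(q,q'):=\inf\{\|x-y\|^s:x\in q,y\in q'\}$, and for $\gamma,\gamma'\in\mathcal D(Q)$ (probability distributions on $Q$), $\mathcal T_c(\gamma,\gamma'):=\min_{\nu}\sum_{q,q'\in Q}c(q,q')\nu(q,q')$, the minimum over couplings $\nu$ of $\gamma$ and $\gamma'$. *)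

theory Defs
  imports "HOL-Probability.Probability"
begin

definition couplings :: "'a::euclidean_space measure \<Rightarrow> 'a measure \<Rightarrow> ('a \<times> 'a) measure set" where
  "couplings p p' = {\<pi>. sets \<pi> = sets (borel \<Otimes>\<^sub>M borel) \<and>
       distr \<pi> borel fst = p \<and> distr \<pi> borel snd = p'}"

definition wasserstein_pow :: "real \<Rightarrow> 'a::euclidean_space measure \<Rightarrow> 'a measure \<Rightarrow> ennreal" where
  "wasserstein_pow s p p' =
     (INF \<pi>\<in>couplings p p'. \<integral>\<^sup>+ z. ennreal (norm (fst z - snd z) powr s) \<partial>\<pi>)"

text \<open>The s-Wasserstein distance (finite for measures with finite s-th moments).\<close>
definition wasserstein :: "real \<Rightarrow> 'a::euclidean_space measure \<Rightarrow> 'a measure \<Rightarrow> real" where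
  "wasserstein s p p' = enn2real (wasserstein_pow s p p') powr (1 / s)"

definition finite_moment_prob :: "real \<Rightarrow> 'a::euclidean_space measure \<Rightarrow> bool" where
  "finite_moment_prob s p \<longleftrightarrow> prob_space p \<and> sets p = sets borel \<and>
     integrable p (\<lambda>x. norm x powr s)"

definition finite_borel_partition :: "'a::euclidean_space set set \<Rightarrow> bool" where
  "finite_borel_partition Q \<longleftrightarrow> finite Q \<and> {} \<notin> Q \<and> \<Union>Q = UNIV \<and>
     (\<forall>q\<in>Q. \<forall>q'\<in>Q. q \<noteq> q' \<longrightarrow> q \<inter> q' = {}) \<and> (\<forall>q\<in>Q. q \<in> sets borel)"

definition cell_cost :: "real \<Rightarrow> 'a::euclidean_space set \<Rightarrow> 'a set \<Rightarrow> real" where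
  "cell_cost s q q' = Inf {norm (x - y) powr s | x y. x \<in> q \<and> y \<in> q'}"

definition disc_couplings :: "'b set \<Rightarrow> ('b \<Rightarrow> real) \<Rightarrow> ('b \<Rightarrow> real) \<Rightarrow> ('b \<Rightarrow> 'b \<Rightarrow> real) set" where
  "disc_couplings Q \<gamma> \<gamma>' = {\<nu>. (\<forall>q\<in>Q. \<forall>q'\<in>Q. \<nu> q q' \<ge> 0) \<and>
      (\<forall>q\<in>Q. (\<Sum>q'\<in>Q. \<nu> q q') = \<gamma> q) \<and> (\<forall>q'\<in>Q. (\<Sum>q\<in>Q. \<nu> q q') = \<gamma>' q')}"

definition transport_cost :: "'b set \<Rightarrow> ('b \<Rightarrow> 'b \<Rightarrow> real) \<Rightarrow> ('b \<Rightarrow> real) \<Rightarrow> ('b \<Rightarrow> real) \<Rightarrow> real" where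
  "transport_cost Q c \<gamma> \<gamma>' =
     Inf ((\<lambda>\<nu>. \<Sum>q\<in>Q. \<Sum>q'\<in>Q. c q q' * \<nu> q q') ` disc_couplings Q \<gamma> \<gamma>')"

end

theory Submission
  imports Defs
begin

lemma coupling_props:
  fixes p p' :: "'a::euclidean_space measure" and \<pi> :: "('a \<times> 'a) measure"
  assumes pi: "\<pi> \<in> couplings p p'"
  shows "space \<pi> = UNIV" "fst \<in> measurable \<pi> borel" "snd \<in> measurable \<pi> borel"
proof -
  have s: "sets \<pi> = sets (borel \<Otimes>\<^sub>M borel)" using pi by (simp add: couplings_def)
  show "space \<pi> = UNIV" using sets_eq_imp_space_eq[OF s] by (simp add: space_pair_measure)
  show "fst \<in> measurable \<pi> borel" unfolding measurable_cong_sets[OF s refl] by (rule measurable_fst)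
  show "snd \<in> measurable \<pi> borel" unfolding measurable_cong_sets[OF s refl] by (rule measurable_snd)
qed

lemma pair_coupling:
  fixes p p' :: "'a::euclidean_space measure"
  assumes "prob_space p" "prob_space p'" "sets p = sets borel" "sets p' = sets borel"
  shows "p \<Otimes>\<^sub>M p' \<in> couplings p p'"
proof -
  interpret P: prob_space p by fact
  interpret P': prob_space p' by fact
  have sp: "space p = UNIV" "space p' = UNIV"
    using sets_eq_imp_space_eq[OF assms(3)] sets_eq_imp_space_eq[OF assms(4)] by auto
  have s: "sets (p \<Otimes>\<^sub>M p') = sets (borel \<Otimes>\<^sub>M borel)"
    using assms by (intro sets_pair_measure_cong) auto
  have "distr (p \<Otimes>\<^sub>M p') borel fst = distr (p \<Otimes>\<^sub>M p') p fst"
    using assms by (intro distr_cong) auto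
  also have "\<dots> = p" by (rule P'.distr_pair_fst)
  finally have 1: "distr (p \<Otimes>\<^sub>M p') borel fst = p" .
  have "distr (p \<Otimes>\<^sub>M p') borel snd = distr (p \<Otimes>\<^sub>M p') p' snd"
    using assms by (intro distr_cong) auto
  also have "\<dots> = p'"
  proof (intro measure_eqI)
    fix A assume A: "A \<in> sets (distr (p \<Otimes>\<^sub>M p') p' snd)"
    then have A': "A \<in> sets p'" by simp
    have "emeasure (distr (p \<Otimes>\<^sub>M p') p' snd) A = emeasure (p \<Otimes>\<^sub>M p') (space p \<times> A)"
      using A' sp by (subst emeasure_distr) (auto simp: space_pair_measure intro!: arg_cong2[where f=emeasure])
    also have "\<dots> = emeasure p' A"
      using A' P'.emeasure_pair_measure_Times[of "space p" p A] P.emeasure_space_1 by simp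
    finally show "emeasure (distr (p \<Otimes>\<^sub>M p') p' snd) A = emeasure p' A" .
  qed simp
  finally have 2: "distr (p \<Otimes>\<^sub>M p') borel snd = p'" .
  show ?thesis using s 1 2 by (simp add: couplings_def)
qed

lemma cost_bound:
  fixes x y :: "'a::euclidean_space" and s :: real
  assumes "s \<ge> 0"
  shows "norm (x - y) powr s \<le> 2 powr s * (norm x powr s + norm y powr s)"
proof -
  define m where "m = max (norm x) (norm y)"
  have "norm (x - y) \<le> norm x + norm y" by (rule norm_triangle_ineq4)
  also have "\<dots> \<le> 2 * m" unfolding m_def by linarith
  finally have "norm (x - y) powr s \<le> (2 * m) powr s"
    using assms by (intro powr_mono2) auto
  also have "\<dots> = 2 powr s * m powr s" using m_def by (simp add: powr_mult)
  also have "m powr s \<le> norm x powr s + norm y powr s"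
    unfolding m_def by (cases "norm x \<le> norm y") (auto simp: max_def)
  hence "2 powr s * m powr s \<le> 2 powr s * (norm x powr s + norm y powr s)" by simp
  finally show ?thesis .
qed

lemma coupling_cost_finite:
  fixes p p' :: "'a::euclidean_space measure" and \<pi> :: "('a \<times> 'a) measure"
  assumes pi: "\<pi> \<in> couplings p p'" and s: "s \<ge> 1"
    and fp: "finite_moment_prob s p" and fp': "finite_moment_prob s p'"
  shows "(\<integral>\<^sup>+ z. ennreal (norm (fst z - snd z) powr s) \<partial>\<pi>) < \<infinity>"
proof -
  note cp = coupling_props[OF pi]
  have m1: "distr \<pi> borel fst = p" and m2: "distr \<pi> borel snd = p'"
    using pi by (auto simp: couplings_def)
  have i1: "(\<integral>\<^sup>+ x. ennreal (norm x powr s) \<partial>p) < \<infinity>"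
    using fp unfolding finite_moment_prob_def integrable_iff_bounded by simp
  have i2: "(\<integral>\<^sup>+ x. ennreal (norm x powr s) \<partial>p') < \<infinity>"
    using fp' unfolding finite_moment_prob_def integrable_iff_bounded by simp
  have e1: "(\<integral>\<^sup>+ z. ennreal (norm (fst z) powr s) \<partial>\<pi>) = (\<integral>\<^sup>+ x. ennreal (norm x powr s) \<partial>p)"
    using m1 cp by (subst m1[symmetric], subst nn_integral_distr) auto
  have e2: "(\<integral>\<^sup>+ z. ennreal (norm (snd z) powr s) \<partial>\<pi>) = (\<integral>\<^sup>+ x. ennreal (norm x powr s) \<partial>p')"
    using m2 cp by (subst m2[symmetric], subst nn_integral_distr) auto
  have meas1: "(\<lambda>z. ennreal (norm (fst z) powr s)) \<in> borel_measurable \<pi>"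
    using cp by measurable
  have meas2: "(\<lambda>z. ennreal (norm (snd z) powr s)) \<in> borel_measurable \<pi>"
    using cp by measurable
  have "(\<integral>\<^sup>+ z. ennreal (norm (fst z - snd z) powr s) \<partial>\<pi>) \<le>
        (\<integral>\<^sup>+ z. ennreal (2 powr s) * (ennreal (norm (fst z) powr s) + ennreal (norm (snd z) powr s)) \<partial>\<pi>)"
    using s by (intro nn_integral_mono)
      (simp add: ennreal_mult[symmetric] ennreal_plus[symmetric] cost_bound del: ennreal_plus)
  also have "\<dots> = ennreal (2 powr s) * ((\<integral>\<^sup>+ z. ennreal (norm (fst z) powr s) \<partial>\<pi>) + (\<integral>\<^sup>+ z. ennreal (norm (snd z) powr s) \<partial>\<pi>))"
    using meas1 meas2 by (simp add: nn_integral_cmult nn_integral_add)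
  also have "\<dots> < \<infinity>" using e1 e2 i1 i2 by (simp add: ennreal_mult_less_top)
  finally show ?thesis .
qed

lemma cell_cost_nonneg:
  assumes "q \<noteq> {}" "q' \<noteq> {}"
  shows "cell_cost s q q' \<ge> 0"
  unfolding cell_cost_def
proof (rule cInf_greatest)
  obtain x y where "x \<in> q" "y \<in> q'" using assms by blast
  then show "{norm (x - y) powr s |x y. x \<in> q \<and> y \<in> q'} \<noteq> {}" by blast
next
  fix r assume "r \<in> {norm (x - y) powr s |x y. x \<in> q \<and> y \<in> q'}"
  then show "0 \<le> r" by auto
qed

lemma cell_cost_le:
  assumes "x \<in> q" "y \<in> q'"
  shows "cell_cost s q q' \<le> norm (x - y) powr s"
  unfolding cell_cost_def
proof (rule cInf_lower)
  show "norm (x - y) powr s \<in> {norm (x - y) powr s |x y. x \<in> q \<and> y \<in> q'}" using assms by blast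
  show "bdd_below {norm (x - y) powr s |x y. x \<in> q \<and> y \<in> q'}"
    by (rule bdd_belowI[where m=0]) auto
qed
lemma partition_unique:
  assumes "finite_borel_partition Q" "q \<in> Q" "q0 \<in> Q" "x \<in> q0"
  shows "x \<in> q \<longleftrightarrow> q = q0"
  using assms unfolding finite_borel_partition_def disjoint_iff by metis

lemma pointwise_bound:
  fixes Q :: "'a::euclidean_space set set"
  assumes part: "finite_borel_partition Q"
  shows "(\<Sum>q\<in>Q. \<Sum>q'\<in>Q. cell_cost s q q' * indicator (q \<times> q') (x, y)) \<le> norm (x - y) powr s"
proof -
  obtain q0 where q0: "q0 \<in> Q" "x \<in> q0" using part unfolding finite_borel_partition_def by (metis UNIV_I UnionE)
  obtain q1 where q1: "q1 \<in> Q" "y \<in> q1" using part unfolding finite_borel_partition_def by (metis UNIV_I UnionE)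
  have fin: "finite Q" using part unfolding finite_borel_partition_def by blast
  have "(\<Sum>q\<in>Q. \<Sum>q'\<in>Q. cell_cost s q q' * indicator (q \<times> q') (x, y))
      = (\<Sum>q\<in>Q. if q = q0 then (\<Sum>q'\<in>Q. if q' = q1 then cell_cost s q0 q1 else 0) else 0)"
  proof (intro sum.cong refl)
    fix q assume q: "q \<in> Q"
    have xq: "x \<in> q \<longleftrightarrow> q = q0" using partition_unique[OF part q q0] .
    have yq: "\<And>q'. q' \<in> Q \<Longrightarrow> y \<in> q' \<longleftrightarrow> q' = q1" using partition_unique[OF part _ q1] .
    show "(\<Sum>q'\<in>Q. cell_cost s q q' * indicator (q \<times> q') (x, y)) =
       (if q = q0 then (\<Sum>q'\<in>Q. if q' = q1 then cell_cost s q0 q1 else 0) else 0)"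
    proof (cases "q = q0")
      case True
      have "(\<Sum>q'\<in>Q. cell_cost s q0 q' * indicator (q0 \<times> q') (x, y)) = (\<Sum>q'\<in>Q. if q' = q1 then cell_cost s q0 q1 else 0)"
      proof (intro sum.cong refl)
        fix q' assume "q' \<in> Q"
        then show "cell_cost s q0 q' * indicator (q0 \<times> q') (x, y) = (if q' = q1 then cell_cost s q0 q1 else 0)"
          using yq[of q'] q0(2) by (simp add: indicator_def)
      qed
      then show ?thesis using True by simp
    next
      case False
      then show ?thesis using xq by (simp add: indicator_def)
    qed
  qed
  also have "\<dots> = cell_cost s q0 q1" using fin q0 q1 by simp
  also have "\<dots> \<le> norm (x - y) powr s" using q0 q1 by (intro cell_cost_le)
  finally show ?thesis .
qed

lemma coupling_disc:
  fixes p p' :: "'a::euclidean_space measure" and \<pi> :: "('a \<times> 'a) measure"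
  assumes pi: "\<pi> \<in> couplings p p'"
    and fp: "finite_moment_prob s p" and fp': "finite_moment_prob s p'"
    and part: "finite_borel_partition Q"
  shows "(\<lambda>q q'. measure \<pi> (q \<times> q')) \<in> disc_couplings Q (\<lambda>q. measure p q) (\<lambda>q. measure p' q)"
    and "ennreal (\<Sum>q\<in>Q. \<Sum>q'\<in>Q. cell_cost s q q' * measure \<pi> (q \<times> q'))
          \<le> (\<integral>\<^sup>+ z. ennreal (norm (fst z - snd z) powr s) \<partial>\<pi>)"
proof -
  note cp = coupling_props[OF pi]
  have sets_pi: "sets \<pi> = sets (borel \<Otimes>\<^sub>M borel)" using pi by (simp add: couplings_def)
  have m1: "distr \<pi> borel fst = p" and m2: "distr \<pi> borel snd = p'"
    using pi by (auto simp: couplings_def)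
  have pp: "prob_space p" "prob_space p'" using fp fp' by (auto simp: finite_moment_prob_def)
  have fin: "finite Q" and ne: "{} \<notin> Q" and borelQ: "\<And>q. q \<in> Q \<Longrightarrow> q \<in> sets borel"
    and disj: "\<And>q q'. q \<in> Q \<Longrightarrow> q' \<in> Q \<Longrightarrow> q \<noteq> q' \<Longrightarrow> q \<inter> q' = {}"
    and cover: "\<Union>Q = UNIV"
    using part unfolding finite_borel_partition_def by auto
  have "emeasure \<pi> (space \<pi>) = emeasure (distr \<pi> borel fst) UNIV"
    using cp by (subst emeasure_distr) auto
  also have "\<dots> = 1" using m1 pp(1) prob_space.emeasure_space_1[OF pp(1)]
    by (metis sets_eq_imp_space_eq sets_distr space_borel)
  finally interpret PI: prob_space \<pi> by (intro prob_spaceI)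
  have rect: "q \<times> q' \<in> sets \<pi>" if "q \<in> Q" "q' \<in> Q" for q q'
    using that borelQ sets_pi by simp
  have marg1: "measure \<pi> (q \<times> UNIV) = measure p q" if "q \<in> Q" for q
  proof -
    have "measure p q = measure (distr \<pi> borel fst) q" using m1 by simp
    also have "\<dots> = measure \<pi> (fst -` q \<inter> space \<pi>)"
      using cp that borelQ by (intro measure_distr) auto
    also have "fst -` q \<inter> space \<pi> = q \<times> UNIV" using cp by auto
    finally show ?thesis by simp
  qed
  have marg2: "measure \<pi> (UNIV \<times> q) = measure p' q" if "q \<in> Q" for q
  proof -
    have "measure p' q = measure (distr \<pi> borel snd) q" using m2 by simp
    also have "\<dots> = measure \<pi> (snd -` q \<inter> space \<pi>)"
      using cp that borelQ by (intro measure_distr) auto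
    also have "snd -` q \<inter> space \<pi> = UNIV \<times> q" using cp by auto
    finally show ?thesis by simp
  qed
  have sum1: "(\<Sum>q'\<in>Q. measure \<pi> (q \<times> q')) = measure p q" if q: "q \<in> Q" for q
  proof -
    have "(\<Sum>q'\<in>Q. measure \<pi> (q \<times> q')) = measure \<pi> (\<Union>q'\<in>Q. q \<times> q')"
    proof (intro measure_finite_Union[symmetric])
      show "disjoint_family_on (\<lambda>q'. q \<times> q') Q"
        unfolding disjoint_family_on_def using disj by blast
    qed (use fin rect q PI.emeasure_eq_measure in auto)
    also have "(\<Union>q'\<in>Q. q \<times> q') = q \<times> UNIV" using cover by blast
    finally show ?thesis using marg1 q by simp
  qed
  have sum2: "(\<Sum>q\<in>Q. measure \<pi> (q \<times> q')) = measure p' q'" if q: "q' \<in> Q" for q'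
  proof -
    have "(\<Sum>q\<in>Q. measure \<pi> (q \<times> q')) = measure \<pi> (\<Union>q\<in>Q. q \<times> q')"
    proof (intro measure_finite_Union[symmetric])
      show "disjoint_family_on (\<lambda>q. q \<times> q') Q"
        unfolding disjoint_family_on_def using disj by blast
    qed (use fin rect q PI.emeasure_eq_measure in auto)
    also have "(\<Union>q\<in>Q. q \<times> q') = UNIV \<times> q'" using cover by blast
    finally show ?thesis using marg2 q by simp
  qed
  show "(\<lambda>q q'. measure \<pi> (q \<times> q')) \<in> disc_couplings Q (\<lambda>q. measure p q) (\<lambda>q. measure p' q)"
    unfolding disc_couplings_def using sum1 sum2 by auto
  have cnn: "cell_cost s q q' \<ge> 0" if "q \<in> Q" "q' \<in> Q" for q q'
    using that ne by (intro cell_cost_nonneg) auto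
  have "ennreal (\<Sum>q\<in>Q. \<Sum>q'\<in>Q. cell_cost s q q' * measure \<pi> (q \<times> q'))
      = (\<Sum>q\<in>Q. \<Sum>q'\<in>Q. (\<integral>\<^sup>+ z. ennreal (cell_cost s q q') * indicator (q \<times> q') z \<partial>\<pi>))"
    using cnn rect
    by (simp add: sum_ennreal[symmetric] sum_nonneg ennreal_mult PI.emeasure_eq_measure nn_integral_cmult_indicator)
  also have "\<dots> = (\<integral>\<^sup>+ z. (\<Sum>q\<in>Q. \<Sum>q'\<in>Q. ennreal (cell_cost s q q') * indicator (q \<times> q') z) \<partial>\<pi>)"
    using rect by (simp add: nn_integral_sum)
  also have "\<dots> \<le> (\<integral>\<^sup>+ z. ennreal (norm (fst z - snd z) powr s) \<partial>\<pi>)"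
  proof (intro nn_integral_mono)
    fix z :: "'a \<times> 'a"
    obtain x y where z: "z = (x, y)" by fastforce
    have "(\<Sum>q\<in>Q. \<Sum>q'\<in>Q. ennreal (cell_cost s q q') * indicator (q \<times> q') z)
        = ennreal (\<Sum>q\<in>Q. \<Sum>q'\<in>Q. cell_cost s q q' * indicator (q \<times> q') (x, y))"
    proof -
      have e: "ennreal (cell_cost s q q') * indicator (q \<times> q') z = ennreal (cell_cost s q q' * indicator (q \<times> q') (x, y))" for q q'
        by (auto simp: z indicator_def)
      have nn: "q \<in> Q \<Longrightarrow> q' \<in> Q \<Longrightarrow> 0 \<le> cell_cost s q q' * indicator (q \<times> q') (x, y)" for q q'
        using cnn by simp
      show ?thesis unfolding e using nn
        by (simp add: sum_ennreal sum_nonneg)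
    qed
    also have "\<dots> \<le> ennreal (norm (x - y) powr s)"
      by (intro ennreal_leI pointwise_bound part)
    finally show "(\<Sum>q\<in>Q. \<Sum>q'\<in>Q. ennreal (cell_cost s q q') * indicator (q \<times> q') z)
        \<le> ennreal (norm (fst z - snd z) powr s)" using z by simp
  qed
  finally show "ennreal (\<Sum>q\<in>Q. \<Sum>q'\<in>Q. cell_cost s q q' * measure \<pi> (q \<times> q'))
          \<le> (\<integral>\<^sup>+ z. ennreal (norm (fst z - snd z) powr s) \<partial>\<pi>)" .
qed
theorem lemma2:
  fixes p p' :: "'a::euclidean_space measure" and Q :: "'a set set" and s \<epsilon> :: real
  assumes "s \<ge> 1" and "\<epsilon> \<ge> 0"
    and "finite_moment_prob s p" and "finite_moment_prob s p'"
    and "finite_borel_partition Q"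
    and "wasserstein s p p' \<le> \<epsilon>"
  shows "transport_cost Q (cell_cost s) (\<lambda>q. measure p q) (\<lambda>q. measure p' q) \<le> \<epsilon> powr s"
proof -
  define T where "T = transport_cost Q (cell_cost s) (\<lambda>q. measure p q) (\<lambda>q. measure p' q)"
  define W where "W = wasserstein_pow s p p'"
  have fp: "prob_space p" "sets p = sets borel" "prob_space p'" "sets p' = sets borel"
    using assms(3,4) by (auto simp: finite_moment_prob_def)
  have c0: "p \<Otimes>\<^sub>M p' \<in> couplings p p'" using pair_coupling fp by blast
  have "W \<le> (\<integral>\<^sup>+ z. ennreal (norm (fst z - snd z) powr s) \<partial>(p \<Otimes>\<^sub>M p'))"
    unfolding W_def wasserstein_pow_def using c0 by (rule INF_lower)
  also have "\<dots> < \<infinity>" using coupling_cost_finite[OF c0 assms(1,3,4)] .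
  finally have Wfin: "W < \<infinity>" .
  have ne: "{} \<notin> Q" using assms(5) by (simp add: finite_borel_partition_def)
  have Tle: "ennreal T \<le> (\<integral>\<^sup>+ z. ennreal (norm (fst z - snd z) powr s) \<partial>\<pi>)"
    if pi: "\<pi> \<in> couplings p p'" for \<pi>
  proof -
    note cd = coupling_disc[OF pi assms(3,4,5)]
    have "T \<le> (\<Sum>q\<in>Q. \<Sum>q'\<in>Q. cell_cost s q q' * measure \<pi> (q \<times> q'))"
      unfolding T_def transport_cost_def
    proof (rule cInf_lower)
      show "(\<Sum>q\<in>Q. \<Sum>q'\<in>Q. cell_cost s q q' * measure \<pi> (q \<times> q'))
          \<in> (\<lambda>\<nu>. \<Sum>q\<in>Q. \<Sum>q'\<in>Q. cell_cost s q q' * \<nu> q q') ` disc_couplings Q (\<lambda>q. measure p q) (\<lambda>q. measure p' q)"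
        using cd(1) by (rule rev_image_eqI) simp
      show "bdd_below ((\<lambda>\<nu>. \<Sum>q\<in>Q. \<Sum>q'\<in>Q. cell_cost s q q' * \<nu> q q') ` disc_couplings Q (\<lambda>q. measure p q) (\<lambda>q. measure p' q))"
      proof (rule bdd_belowI[where m=0])
        fix r assume "r \<in> (\<lambda>\<nu>. \<Sum>q\<in>Q. \<Sum>q'\<in>Q. cell_cost s q q' * \<nu> q q') ` disc_couplings Q (\<lambda>q. measure p q) (\<lambda>q. measure p' q)"
        then obtain \<nu> where nu: "\<nu> \<in> disc_couplings Q (\<lambda>q. measure p q) (\<lambda>q. measure p' q)"
          and r: "r = (\<Sum>q\<in>Q. \<Sum>q'\<in>Q. cell_cost s q q' * \<nu> q q')" by blast
        have "0 \<le> cell_cost s q q' * \<nu> q q'" if qs: "q \<in> Q" "q' \<in> Q" for q q'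
        proof (rule mult_nonneg_nonneg)
          have "q \<noteq> {}" "q' \<noteq> {}" using ne qs by auto
          then show "0 \<le> cell_cost s q q'" by (rule cell_cost_nonneg)
          show "0 \<le> \<nu> q q'" using nu qs unfolding disc_couplings_def by blast
        qed
        then show "0 \<le> r" unfolding r by (intro sum_nonneg) auto
      qed
    qed
    then have "ennreal T \<le> ennreal (\<Sum>q\<in>Q. \<Sum>q'\<in>Q. cell_cost s q q' * measure \<pi> (q \<times> q'))"
      by (rule ennreal_leI)
    also have "\<dots> \<le> (\<integral>\<^sup>+ z. ennreal (norm (fst z - snd z) powr s) \<partial>\<pi>)" by (rule cd(2))
    finally show ?thesis .
  qed
  have "ennreal T \<le> W" unfolding W_def wasserstein_pow_def
    using Tle by (rule INF_greatest)
  then have T1: "T \<le> enn2real W"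
  proof (cases "T \<ge> 0")
    case True
    then have "T = enn2real (ennreal T)" by simp
    also have "\<dots> \<le> enn2real W" using \<open>ennreal T \<le> W\<close> Wfin by (intro enn2real_mono) auto
    finally show ?thesis .
  next
    case False
    then show ?thesis using enn2real_nonneg[of W] by linarith
  qed
  have "enn2real W powr (1 / s) \<le> \<epsilon>" using assms(6) unfolding wasserstein_def W_def .
  then have "(enn2real W powr (1 / s)) powr s \<le> \<epsilon> powr s"
    using assms(1) by (intro powr_mono2) auto
  also have "(enn2real W powr (1 / s)) powr s = enn2real W"
    using assms(1) by (simp add: powr_powr)
  finally show ?thesis using T1 unfolding T_def by simp
qed
end
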